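(* For all $u_1, \ldots, u_n \in \mathcal{L}_s$, there exists a unique subset $\{v_1, \ldots, v_m\} \subseteq \{u_1, \ldots, u_n\}$ such that $\max(u_1, \ldots, u_n) =_{\mathcal{L}} \max(v_1, \ldots, v_m)$ and $\max(v_1, \ldots, v_m) \in \mathcal{L}_r$.
   Context: $\mathcal{X}$ is a countable set of variables; a valuation is $\sigma\colon\mathcal{X}\to\mathbb{N}$. For finite $E\subseteq\mathcal{X}$, $x\in\mathcal{X}$, $S\in\mathbb{N}$, the sublevels $A(E,x,S)$ and $B(E,S)$ have values $[A(E,x,S)]_\sigma = 0$ if some $y\in E$ has $\sigma(y)=0$, and $\sigma(x)+S$ otherwise; $[B(E,S)]_\sigma=0$ if some $y\in E$ has $\sigma(y)=0$, and $S$ otherwise. $\mathcal{L}_s$ is the set of sublevels $A(E,x,S)$ with $x\in E$ and $B(E,S)$ with $S>0$. $t_1\leqslant_{\mathcal{L}} t_2$ (resp. $t_1 =_{\mathcal{L}} t_2$) means $[t_1]_\sigma\le[t_2]_\sigma$ (resp. $=$) for every valuation $\sigma$; $\max$ of a finite family is evaluated pointwise (empty max has value $0$). Two sublevels $u,v$ are incomparable if neither $u\leqslant_{\mathcal{L}} v$ nor $v\leqslant_{\mathcal{L}} u$. A minimal representation is a formal expression $\max(v_1,\ldots,v_m)$ where $\{v_1,\ldots,v_m\}$ is a finite set of pairwise incomparable elements of $\mathcal{L}_s$; $\mathcal{L}_r$ is the set of minimal representations. *)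

theory Defs
  imports "HOL-Library.Countable"
begin

text \<open>Sublevels over a (countable) type of variables 'x.
  A E x S and B E S; finiteness of E is imposed in the membership predicate Ls.\<close>
datatype 'x sublevel = A "'x set" 'x nat | B "'x set" nat

type_synonym 'x valuation = "'x \<Rightarrow> nat"

fun sval :: "'x valuation \<Rightarrow> 'x sublevel \<Rightarrow> nat" where
  "sval \<sigma> (A E x S) = (if \<exists>y\<in>E. \<sigma> y = 0 then 0 else \<sigma> x + S)"
| "sval \<sigma> (B E S) = (if \<exists>y\<in>E. \<sigma> y = 0 then 0 else S)"

definition leL :: "'x sublevel \<Rightarrow> 'x sublevel \<Rightarrow> bool" where
  "leL t1 t2 \<longleftrightarrow> (\<forall>\<sigma>. sval \<sigma> t1 \<le> sval \<sigma> t2)"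

definition incomparable :: "'x sublevel \<Rightarrow> 'x sublevel \<Rightarrow> bool" where
  "incomparable u v \<longleftrightarrow> \<not> leL u v \<and> \<not> leL v u"

definition Ls :: "'x sublevel set" where
  "Ls = {A E x S | E x S. finite E \<and> x \<in> E} \<union> {B E S | E S. finite E \<and> S > 0}"

definition maxval :: "'x valuation \<Rightarrow> 'x sublevel set \<Rightarrow> nat" where
  "maxval \<sigma> V = Max (insert 0 (sval \<sigma> ` V))"

definition eqL_max :: "'x sublevel set \<Rightarrow> 'x sublevel set \<Rightarrow> bool" where
  "eqL_max U V \<longleftrightarrow> (\<forall>\<sigma>. maxval \<sigma> U = maxval \<sigma> V)"

text \<open>Minimal representations, identified with their (finite) sets of arguments.\<close>
definition Lr :: "'x sublevel set set" where
  "Lr = {V. finite V \<and> V \<subseteq> Ls \<and> (\<forall>u\<in>V. \<forall>v\<in>V. u \<noteq> v \<longrightarrow> incomparable u v)}"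

end

theory Submission
  imports Defs
begin

lemma leL_refl: "leL u u" by (simp add: leL_def)
lemma leL_trans: "leL u v \<Longrightarrow> leL v w \<Longrightarrow> leL u w"
  unfolding leL_def by (meson le_trans)

lemma maxval_ge: "finite V \<Longrightarrow> v \<in> V \<Longrightarrow> sval \<sigma> v \<le> maxval \<sigma> V"
  unfolding maxval_def by (simp add: Max_ge)

lemma maxval_attain:
  assumes "finite V" "0 < k" "k \<le> maxval \<sigma> V"
  shows "\<exists>v\<in>V. k \<le> sval \<sigma> v"
proof -
  have "maxval \<sigma> V \<in> insert 0 (sval \<sigma> ` V)"
    unfolding maxval_def using assms(1) by (intro Max_in) auto
  with assms show ?thesis by auto
qed

fun Eof :: "'x sublevel \<Rightarrow> 'x set" where
  "Eof (A E _ _) = E" | "Eof (B E _) = E"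

lemma zero_Ls: "c \<in> Ls \<Longrightarrow> sval \<sigma> c = 0 \<longleftrightarrow> (\<exists>y\<in>Eof c. \<sigma> y = 0)"
  unfolding Ls_def by (auto split: if_splits; force)

lemma sub_Ls:
  assumes c: "c \<in> Ls" and d: "d \<in> Ls" and cd: "leL c d"
  shows "Eof d \<subseteq> Eof c"
proof
  fix z assume z: "z \<in> Eof d"
  let ?s = "\<lambda>y. if y = z then 0 else 1::nat"
  have "sval ?s d = 0" using zero_Ls[OF d, of ?s] z by auto
  then have "sval ?s c = 0" using cd unfolding leL_def by (metis le_zero_eq)
  then show "z \<in> Eof c" using zero_Ls[OF c, of ?s] by (auto split: if_splits)
qed

lemma antisym_Ls:
  assumes a: "a \<in> Ls" and b: "b \<in> Ls" and ab: "leL a b" and ba: "leL b a"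
  shows "a = b"
proof -
  have eq: "\<And>\<sigma>. sval \<sigma> a = sval \<sigma> b" using ab ba unfolding leL_def by (meson le_antisym)
  have EE: "Eof a = Eof b" using sub_Ls[OF a b ab] sub_Ls[OF b a ba] by auto
  have v1: "sval (\<lambda>y. 1) a = sval (\<lambda>y. 1) b" by (rule eq)
  have v2: "sval (\<lambda>y. 2) a = sval (\<lambda>y. 2) b" by (rule eq)
  show "a = b"
  proof (cases a)
    case aA: (A E x S)
    show ?thesis
    proof (cases b)
      case (A E' x' S')
      have "x = x'"
      proof (rule ccontr)
        assume nx: "x \<noteq> x'"
        have "sval (\<lambda>y. if y = x then S' + 2 else 1) a = sval (\<lambda>y. if y = x then S' + 2 else 1) b"
          by (rule eq)
        then show False using aA A nx by (auto split: if_splits)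
      qed
      then show ?thesis using v1 EE aA A by auto
    next
      case (B E' S')
      then show ?thesis using v1 v2 aA by (auto split: if_splits)
    qed
  next
    case aB: (B E S)
    show ?thesis
    proof (cases b)
      case (A E' x' S')
      then show ?thesis using v1 v2 aB by (auto split: if_splits)
    next
      case (B E' S')
      then show ?thesis using v1 EE aB by (auto split: if_splits)
    qed
  qed
qed

fun prm :: "'x sublevel \<Rightarrow> nat" where
  "prm (A _ _ s) = s" | "prm (B _ s) = s"

lemma Ls_cases: "v \<in> Ls \<Longrightarrow> (\<exists>E' x' S'. v = A E' x' S' \<and> x' \<in> E') \<or> (\<exists>E' S'. v = B E' S' \<and> S' > 0)"
  unfolding Ls_def by auto

lemma sval_pos_sub:
  assumes "0 < sval \<sigma> v" shows "\<forall>y\<in>Eof v. 0 < \<sigma> y"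
  using assms by (cases v) (auto split: if_splits)

lemma join_prime:
  assumes u: "u \<in> Ls" and V: "finite V" "V \<subseteq> Ls"
    and le: "\<And>\<sigma>. sval \<sigma> u \<le> maxval \<sigma> V"
  shows "\<exists>v\<in>V. leL u v"
proof -
  have par: "\<And>v. v \<in> V \<Longrightarrow> (\<exists>E' x' S'. v = A E' x' S' \<and> x' \<in> E') \<or> (\<exists>E' S'. v = B E' S' \<and> S' > 0)"
    using V(2) Ls_cases by blast
  show ?thesis
  proof (cases u)
    case (B E S)
    then have S: "S > 0" using u unfolding Ls_def by auto
    define \<sigma>0 where "\<sigma>0 = (\<lambda>y. if y \<in> E then 1 else 0::nat)"
    have "sval \<sigma>0 u = S" using B S by (simp add: \<sigma>0_def)
    with le[of \<sigma>0] maxval_attain[OF V(1) S] obtain v where v: "v \<in> V" "S \<le> sval \<sigma>0 v"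
      by auto
    have sub: "Eof v \<subseteq> E"
    proof
      fix y assume "y \<in> Eof v"
      then have "0 < \<sigma>0 y" using sval_pos_sub[of \<sigma>0 v] v(2) S by auto
      then show "y \<in> E" by (simp add: \<sigma>0_def split: if_splits)
    qed
    have "leL u v"
    proof (cases "\<exists>E' x' S'. v = A E' x' S' \<and> x' \<in> E'")
      case True
      then obtain E' x' S' where vv: "v = A E' x' S'" "x' \<in> E'" by blast
      have sub': "E' \<subseteq> E" using sub vv by simp
      have "\<sigma>0 x' = 1" using sub' vv(2) by (auto simp: \<sigma>0_def)
      then have SS: "S \<le> 1 + S'"
        using v(2) S vv by (simp split: if_splits)
      show ?thesis unfolding leL_def
      proof
        fix \<sigma>
        show "sval \<sigma> u \<le> sval \<sigma> v"
        proof (cases "\<exists>y\<in>E. \<sigma> y = 0")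
          case True then show ?thesis using B by simp
        next
          case False
          then have "\<not> (\<exists>y\<in>E'. \<sigma> y = 0)" using sub' by blast
          moreover have "\<sigma> x' \<ge> 1" using False sub' vv(2) by (metis less_one not_le subsetD)
          ultimately show ?thesis using B vv False SS by auto
        qed
      qed
    next
      case False
      then obtain E' S' where vv: "v = B E' S'" using par[OF v(1)] by blast
      have sub': "E' \<subseteq> E" using sub vv by simp
      have SS: "S \<le> S'"
        using v(2) S vv by (simp split: if_splits)
      show ?thesis unfolding leL_def
      proof
        fix \<sigma>
        show "sval \<sigma> u \<le> sval \<sigma> v"
        proof (cases "\<exists>y\<in>E. \<sigma> y = 0")
          case True then show ?thesis using B by simp
        next
          case False
          then have "\<not> (\<exists>y\<in>E'. \<sigma> y = 0)" using sub' by blast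
          then show ?thesis using B vv False SS by auto
        qed
      qed
    qed
    with v show ?thesis by blast
  next
    case (A E x S)
    then have xE: "x \<in> E" using u unfolding Ls_def by auto
    define N where "N = Max (insert 0 (prm ` V)) + 2"
    have Nb: "\<And>v. v \<in> V \<Longrightarrow> prm v + 2 \<le> N"
      unfolding N_def using V(1) by (simp add: Max_ge)
    have N2: "N \<ge> 2" unfolding N_def by simp
    define \<sigma>0 where "\<sigma>0 = (\<lambda>y. if y \<in> E then (if y = x then N else 1) else 0::nat)"
    have pos: "\<forall>y\<in>E. 0 < \<sigma>0 y" using N2 by (simp add: \<sigma>0_def)
    have "sval \<sigma>0 u = N + S" using A xE pos by (auto simp: \<sigma>0_def)
    moreover have "N + S > 0" using N2 by simp
    ultimately obtain v where v: "v \<in> V" "N + S \<le> sval \<sigma>0 v"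
      using le[of \<sigma>0] maxval_attain[OF V(1)] by metis
    have sub: "Eof v \<subseteq> E"
    proof
      fix y assume "y \<in> Eof v"
      then have "0 < \<sigma>0 y" using sval_pos_sub[of \<sigma>0 v] v(2) N2 by auto
      then show "y \<in> E" by (simp add: \<sigma>0_def split: if_splits)
    qed
    have "leL u v"
    proof (cases "\<exists>E' x' S'. v = A E' x' S' \<and> x' \<in> E'")
      case True
      then obtain E' x' S' where vv: "v = A E' x' S'" "x' \<in> E'" by blast
      have nb: "S' + 2 \<le> N" using Nb[OF v(1)] vv by simp
      have sub': "E' \<subseteq> E" using sub vv by simp
      have "\<not> (\<exists>y\<in>E'. \<sigma>0 y = 0)" using sub' pos by fastforce
      then have val: "sval \<sigma>0 v = \<sigma>0 x' + S'" using vv by auto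
      have xx: "x' = x"
      proof (rule ccontr)
        assume "x' \<noteq> x"
        then have "\<sigma>0 x' = 1" using sub' vv(2) by (auto simp: \<sigma>0_def)
        then show False using v(2) val nb by simp
      qed
      have SS: "S \<le> S'" using v(2) val xx xE by (simp add: \<sigma>0_def)
      show ?thesis unfolding leL_def
      proof
        fix \<sigma>
        show "sval \<sigma> u \<le> sval \<sigma> v"
        proof (cases "\<exists>y\<in>E. \<sigma> y = 0")
          case True then show ?thesis using A by simp
        next
          case False
          then have "\<not> (\<exists>y\<in>E'. \<sigma> y = 0)" using sub' by blast
          then show ?thesis using A vv False SS xx by auto
        qed
      qed
    next
      case False
      then obtain E' S' where vv: "v = B E' S'" using par[OF v(1)] by blast
      have nb: "S' + 2 \<le> N" using Nb[OF v(1)] vv by simp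
      have "sval \<sigma>0 v \<le> S'" using vv by simp
      then have False using v(2) nb by simp
      then show ?thesis ..
    qed
    with v show ?thesis by blast
  qed
qed

lemma exists_max:
  assumes "finite U" "U \<subseteq> Ls" "u \<in> U"
  shows "\<exists>m\<in>U. leL u m \<and> (\<forall>w\<in>U. leL m w \<longrightarrow> w = m)"
  using assms(3)
proof (induction "card {w\<in>U. leL u w \<and> w \<noteq> u}" arbitrary: u rule: less_induct)
  case less
  show ?case
  proof (cases "\<forall>w\<in>U. leL u w \<longrightarrow> w = u")
    case True
    then show ?thesis using less.prems leL_refl by blast
  next
    case False
    then obtain w where w: "w \<in> U" "leL u w" "w \<noteq> u" by blast
    have ss: "{z\<in>U. leL w z \<and> z \<noteq> w} \<subset> {z\<in>U. leL u z \<and> z \<noteq> u}"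
    proof
      show "{z\<in>U. leL w z \<and> z \<noteq> w} \<subseteq> {z\<in>U. leL u z \<and> z \<noteq> u}"
      proof clarify
        fix z assume z: "z \<in> U" "leL w z" "z \<noteq> w"
        show "leL u z \<and> z \<noteq> u"
        proof
          show "leL u z" using leL_trans w z by blast
          show "z \<noteq> u"
          proof
            assume "z = u"
            then have "w = u" using antisym_Ls[of w u] w z assms(2) less.prems by auto
            then show False using w by simp
          qed
        qed
      qed
      show "{z\<in>U. leL w z \<and> z \<noteq> w} \<noteq> {z\<in>U. leL u z \<and> z \<noteq> u}"
        using w by blast
    qed
    have "card {z\<in>U. leL w z \<and> z \<noteq> w} < card {z\<in>U. leL u z \<and> z \<noteq> u}"
      using ss assms(1) by (intro psubset_card_mono) auto
    from less.hyps[OF this w(1)] obtain m where "m \<in> U" "leL w m" "\<forall>z\<in>U. leL m z \<longrightarrow> z = m"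
      by blast
    then show ?thesis using leL_trans w by blast
  qed
qed

theorem proposition34:
  fixes us :: "('x::countable) sublevel list"
  assumes "set us \<subseteq> Ls"
  shows "\<exists>!V. V \<subseteq> set us \<and> eqL_max (set us) V \<and> V \<in> Lr"
proof -
  let ?U = "set us"
  define M where "M = {u\<in>?U. \<forall>w\<in>?U. leL u w \<longrightarrow> w = u}"
  have fU: "finite ?U" by simp
  have MU: "M \<subseteq> ?U" unfolding M_def by auto
  have fM: "finite M" using MU fU finite_subset by blast
  have eqM: "eqL_max ?U M"
    unfolding eqL_max_def
  proof
    fix \<sigma>
    have "maxval \<sigma> M \<le> maxval \<sigma> ?U"
      unfolding maxval_def using MU fU by (intro Max_mono) auto
    moreover have "maxval \<sigma> ?U \<le> maxval \<sigma> M"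
      unfolding maxval_def
    proof (rule Max.boundedI)
      show "finite (insert 0 (sval \<sigma> ` ?U))" by simp
      show "insert 0 (sval \<sigma> ` ?U) \<noteq> {}" by simp
      fix a assume "a \<in> insert 0 (sval \<sigma> ` ?U)"
      then show "a \<le> Max (insert 0 (sval \<sigma> ` M))"
      proof
        assume "a = 0" then show ?thesis by simp
      next
        assume "a \<in> sval \<sigma> ` ?U"
        then obtain u where u: "u \<in> ?U" "a = sval \<sigma> u" by blast
        obtain m where m: "m \<in> ?U" "leL u m" "\<forall>w\<in>?U. leL m w \<longrightarrow> w = m"
          using exists_max[OF fU assms u(1)] by blast
        have "m \<in> M" using m M_def by auto
        then have "sval \<sigma> m \<le> Max (insert 0 (sval \<sigma> ` M))"
          using maxval_ge[OF fM, of m \<sigma>] by (simp add: maxval_def)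
        then show ?thesis using u m(2) unfolding leL_def by (meson le_trans)
      qed
    qed
    ultimately show "maxval \<sigma> ?U = maxval \<sigma> M" by simp
  qed
  have LrM: "M \<in> Lr"
    unfolding Lr_def incomparable_def using fM MU assms unfolding M_def by blast
  show ?thesis
  proof (rule ex1I[of _ M])
    show "M \<subseteq> ?U \<and> eqL_max ?U M \<and> M \<in> Lr" using MU eqM LrM by blast
  next
    fix V assume V: "V \<subseteq> ?U \<and> eqL_max ?U V \<and> V \<in> Lr"
    have fV: "finite V" and VL: "V \<subseteq> Ls" and VU: "V \<subseteq> ?U"
      and inc: "\<forall>u\<in>V. \<forall>v\<in>V. u \<noteq> v \<longrightarrow> incomparable u v"
      using V unfolding Lr_def by auto
    have dom: "\<And>u. u \<in> ?U \<Longrightarrow> \<exists>v\<in>V. leL u v"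
    proof -
      fix u assume u: "u \<in> ?U"
      show "\<exists>v\<in>V. leL u v"
      proof (rule join_prime[OF _ fV VL])
        show "u \<in> Ls" using u assms by blast
        fix \<sigma>
        have "sval \<sigma> u \<le> maxval \<sigma> ?U" using maxval_ge[OF fU u] .
        also have "\<dots> = maxval \<sigma> V" using V unfolding eqL_max_def by blast
        finally show "sval \<sigma> u \<le> maxval \<sigma> V" .
      qed
    qed
    show "V = M"
    proof
      show "V \<subseteq> M"
      proof
        fix v assume v: "v \<in> V"
        have "\<forall>w\<in>?U. leL v w \<longrightarrow> w = v"
        proof (intro ballI impI)
          fix w assume w: "w \<in> ?U" "leL v w"
          obtain v' where v': "v' \<in> V" "leL w v'" using dom[OF w(1)] by blast
          have "leL v v'" using leL_trans w v' by blast
          then have "v' = v" using inc v v' unfolding incomparable_def by blast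
          then show "w = v" using antisym_Ls[of w v] w v' v VL assms by auto
        qed
        then show "v \<in> M" using v VU M_def by auto
      qed
      show "M \<subseteq> V"
      proof
        fix m assume m: "m \<in> M"
        then have mU: "m \<in> ?U" using MU by blast
        obtain v where v: "v \<in> V" "leL m v" using dom[OF mU] by blast
        have "v = m" using m v VU unfolding M_def by blast
        then show "m \<in> V" using v by simp
      qed
    qed
  qed
qed

end
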